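(* Let $\mathcal{X}$ be a finite nonempty set of types and $\Phi=(\Phi_{xy})_{x,y\in\mathcal{X}}$ a real matrix with $\Phi_{xy}=\Phi_{yx}$. Let $(n^k)_{k\ge1}$ be a sequence of vectors of nonnegative integers $n^k=(n^k_x)_{x\in\mathcal{X}}$ with $N^k=\sum_x n^k_x\to\infty$ and $n^k_x/N^k\to f_x$ for each $x$, as $k\to\infty$. Then $$\lim_{k\to\infty}\frac{\mathcal{W}_{\mathcal{P}}(n^k,\Phi)}{N^k}=\lim_{k\to\infty}\frac{\mathcal{W}_{\mathcal{B}}(n^k,n^k,\Phi/2)}{N^k}=\mathcal{W}_{\mathcal{B}}(f,f,\Phi/2).$$
   Context: Feasible roommate matchings: $\mathcal{P}(n)=\{\mu=(\mu_{xy})_{x,y\in\mathcal{X}}:\ \mu_{xy}\in\mathbb{N},\ \mu_{xy}=\mu_{yx},\ 2\mu_{xx}+\sum_{y\neq x}\mu_{xy}\le n_x\ \forall x\}$; total surplus $S_R(\mu;\Phi)=\sum_x\mu_{xx}\Phi_{xx}+\sum_{x\neq y}\mu_{xy}\Phi_{xy}/2$; $\mathcal{W}_{\mathcal{P}}(n,\Phi)=\max_{\mu\in\mathcal{P}(n)}S_R(\mu;\Phi)$. For integer $n$, $\mathcal{B}(n,n)=\{\nu\in\mathbb{N}^{\mathcal{X}\times\mathcal{X}}:\ \sum_y\nu_{xy}\le n_x\ \forall x,\ \sum_x\nu_{xy}\le n_y\ \forall y\}$ and $\mathcal{W}_{\mathcal{B}}(n,n,\Phi/2)=\max_{\nu\in\mathcal{B}(n,n)}\sum_{x,y}\nu_{xy}\Phi_{xy}/2$.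 For a vector $f$ of nonnegative reals, $\mathcal{W}_{\mathcal{B}}(f,f,\Phi/2)$ is defined by the same maximization with $\nu_{xy}\in\mathbb{N}$ replaced by $\nu_{xy}\ge0$ real (a linear program). *)

theory Defs
  imports Complex_Main
begin

text \<open>Types range over a finite type 'x (nonempty since HOL types are nonempty).\<close>

definition roommate_feasible :: "('x::finite \<Rightarrow> nat) \<Rightarrow> ('x \<Rightarrow> 'x \<Rightarrow> nat) set" where
  "roommate_feasible n = {\<mu>. (\<forall>x y. \<mu> x y = \<mu> y x) \<and>
      (\<forall>x. 2 * \<mu> x x + (\<Sum>y\<in>UNIV - {x}. \<mu> x y) \<le> n x)}"

definition roommate_surplus :: "('x::finite \<Rightarrow> 'x \<Rightarrow> nat) \<Rightarrow> ('x \<Rightarrow> 'x \<Rightarrow> real) \<Rightarrow> real" where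
  "roommate_surplus \<mu> \<Phi> = (\<Sum>x\<in>UNIV. real (\<mu> x x) * \<Phi> x x)
      + (\<Sum>(x,y)\<in>{(x,y). x \<noteq> y}. real (\<mu> x y) * \<Phi> x y / 2)"

definition W_P :: "('x::finite \<Rightarrow> nat) \<Rightarrow> ('x \<Rightarrow> 'x \<Rightarrow> real) \<Rightarrow> real" where
  "W_P n \<Phi> = Max ((\<lambda>\<mu>. roommate_surplus \<mu> \<Phi>) ` roommate_feasible n)"

definition bip_feasible :: "('x::finite \<Rightarrow> nat) \<Rightarrow> ('x \<Rightarrow> nat) \<Rightarrow> ('x \<Rightarrow> 'x \<Rightarrow> nat) set" where
  "bip_feasible n m = {\<nu>. (\<forall>x. (\<Sum>y\<in>UNIV. \<nu> x y) \<le> n x) \<and> (\<forall>y. (\<Sum>x\<in>UNIV. \<nu> x y) \<le> m y)}"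

definition W_B :: "('x::finite \<Rightarrow> nat) \<Rightarrow> ('x \<Rightarrow> nat) \<Rightarrow> ('x \<Rightarrow> 'x \<Rightarrow> real) \<Rightarrow> real" where
  "W_B n m \<Psi> = Max ((\<lambda>\<nu>. \<Sum>(x,y)\<in>UNIV. real (\<nu> x y) * \<Psi> x y) ` bip_feasible n m)"

definition bip_feasible_real :: "('x::finite \<Rightarrow> real) \<Rightarrow> ('x \<Rightarrow> real) \<Rightarrow> ('x \<Rightarrow> 'x \<Rightarrow> real) set" where
  "bip_feasible_real f g = {\<nu>. (\<forall>x y. 0 \<le> \<nu> x y) \<and>
      (\<forall>x. (\<Sum>y\<in>UNIV. \<nu> x y) \<le> f x) \<and> (\<forall>y. (\<Sum>x\<in>UNIV. \<nu> x y) \<le> g y)}"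

definition W_B_real :: "('x::finite \<Rightarrow> real) \<Rightarrow> ('x \<Rightarrow> real) \<Rightarrow> ('x \<Rightarrow> 'x \<Rightarrow> real) \<Rightarrow> real" where
  "W_B_real f g \<Psi> = Sup ((\<lambda>\<nu>. \<Sum>(x,y)\<in>UNIV. \<nu> x y * \<Psi> x y) ` bip_feasible_real f g)"

end

theory Submission
  imports Defs "HOL-Library.FuncSet"
begin

lemma finite_bounded_funs:
  "finite {\<mu> :: 'x::finite \<Rightarrow> 'x \<Rightarrow> nat. \<forall>x y. \<mu> x y \<le> B}"
proof -
  have F: "finite {g :: 'x \<Rightarrow> nat. \<forall>y. g y \<in> {..B}}"
    using finite_PiE[of "UNIV :: 'x set" "\<lambda>_. {..B}"] by (auto simp: PiE_def Pi_def)
  have "finite {\<mu> :: 'x \<Rightarrow> 'x \<Rightarrow> nat. \<forall>x. \<mu> x \<in> {g. \<forall>y. g y \<in> {..B}}}"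
    using finite_PiE[of "UNIV :: 'x set" "\<lambda>_. {g :: 'x \<Rightarrow> nat. \<forall>y. g y \<in> {..B}}"] F
    by (auto simp: PiE_def Pi_def)
  then show ?thesis by simp
qed

lemma finite_roommate: "finite (roommate_feasible (n :: 'x::finite \<Rightarrow> nat))"
proof (rule finite_subset[OF _ finite_bounded_funs[of "\<Sum>z\<in>UNIV. n z"]])
  show "roommate_feasible n \<subseteq> {\<mu>. \<forall>x y. \<mu> x y \<le> (\<Sum>z\<in>UNIV. n z)}"
  proof (clarify)
    fix \<mu> x y assume m: "\<mu> \<in> roommate_feasible n"
    have c: "2 * \<mu> x x + (\<Sum>y\<in>UNIV - {x}. \<mu> x y) \<le> n x" using m unfolding roommate_feasible_def by blast
    have "\<mu> x y \<le> n x"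
    proof (cases "x = y")
      case True then show ?thesis using c by auto
    next
      case False
      then have "\<mu> x y \<le> (\<Sum>y\<in>UNIV - {x}. \<mu> x y)" by (intro member_le_sum) auto
      then show ?thesis using c by auto
    qed
    also have "n x \<le> (\<Sum>z\<in>UNIV. n z)" by (intro member_le_sum) auto
    finally show "\<mu> x y \<le> (\<Sum>z\<in>UNIV. n z)" .
  qed
qed

lemma finite_bip: "finite (bip_feasible (n :: 'x::finite \<Rightarrow> nat) m)"
proof (rule finite_subset[OF _ finite_bounded_funs[of "\<Sum>z\<in>UNIV. n z"]])
  show "bip_feasible n m \<subseteq> {\<mu>. \<forall>x y. \<mu> x y \<le> (\<Sum>z\<in>UNIV. n z)}"
  proof (clarify)
    fix \<mu> x y assume m: "\<mu> \<in> bip_feasible n m"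
    have "\<mu> x y \<le> (\<Sum>y\<in>UNIV. \<mu> x y)" by (intro member_le_sum) auto
    also have "\<dots> \<le> n x" using m by (simp add: bip_feasible_def)
    also have "n x \<le> (\<Sum>z\<in>UNIV. n z)" by (intro member_le_sum) auto
    finally show "\<mu> x y \<le> (\<Sum>z\<in>UNIV. n z)" .
  qed
qed

lemma sum_diag:
  fixes h :: "'x::finite \<times> 'x \<Rightarrow> real"
  shows "(\<Sum>p\<in>UNIV. h p) = (\<Sum>x\<in>UNIV. h (x,x)) + (\<Sum>p\<in>{(x,y). x\<noteq>y}. h p)"
proof -
  have U: "(UNIV :: ('x \<times> 'x) set) = (\<lambda>x. (x,x)) ` UNIV \<union> {(x,y). x\<noteq>y}" by auto
  have "(\<Sum>p\<in>UNIV. h p) = (\<Sum>p\<in>(\<lambda>x. (x,x)) ` UNIV. h p) + (\<Sum>p\<in>{(x,y). x\<noteq>y}. h p)"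
    by (subst U, rule sum.union_disjoint) auto
  also have "(\<Sum>p\<in>(\<lambda>x. (x,x)) ` UNIV. h p) = (\<Sum>x\<in>UNIV. h (x,x))"
    by (subst sum.reindex) (auto simp: inj_on_def)
  finally show ?thesis .
qed

definition Dm :: "('x \<Rightarrow> 'x \<Rightarrow> nat) \<Rightarrow> 'x \<Rightarrow> 'x \<Rightarrow> nat" where
  "Dm \<mu> x y = (if x = y then 2 * \<mu> x y else \<mu> x y)"

lemma surplus_Dm:
  "roommate_surplus (\<mu> :: 'x::finite \<Rightarrow> 'x \<Rightarrow> nat) \<Phi> = (\<Sum>(x,y)\<in>UNIV. real (Dm \<mu> x y) * (\<Phi> x y / 2))"
proof -
  have "(\<Sum>(x,y)\<in>UNIV. real (Dm \<mu> x y) * (\<Phi> x y / 2)) =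
     (\<Sum>x\<in>UNIV. real (Dm \<mu> x x) * (\<Phi> x x / 2)) + (\<Sum>(x,y)\<in>{(x,y). x\<noteq>y}. real (Dm \<mu> x y) * (\<Phi> x y / 2))"
    using sum_diag[of "\<lambda>(x,y). real (Dm \<mu> x y) * (\<Phi> x y / 2)"] by simp
  also have "\<dots> = roommate_surplus \<mu> \<Phi>"
    unfolding roommate_surplus_def
    by (intro arg_cong2[where f="(+)"] sum.cong) (auto simp: Dm_def)
  finally show ?thesis by simp
qed

lemma sum_swap_UNIV:
  fixes h :: "'x::finite \<Rightarrow> 'x \<Rightarrow> real"
  shows "(\<Sum>(x,y)\<in>UNIV. h y x) = (\<Sum>(x,y)\<in>UNIV. h x y)"
proof -
  have "(\<Sum>(x,y)\<in>UNIV. h y x) = (\<Sum>x\<in>UNIV. \<Sum>y\<in>UNIV. h y x)"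
    by (simp add: sum.cartesian_product UNIV_Times_UNIV[symmetric] del: UNIV_Times_UNIV)
  also have "\<dots> = (\<Sum>y\<in>UNIV. \<Sum>x\<in>UNIV. h y x)" by (rule sum.swap)
  also have "\<dots> = (\<Sum>(x,y)\<in>UNIV. h x y)"
    by (simp add: sum.cartesian_product UNIV_Times_UNIV[symmetric] del: UNIV_Times_UNIV)
  finally show ?thesis .
qed

lemma sum_max_le:
  fixes a :: "'x::finite \<Rightarrow> real"
  assumes "\<And>y. 0 \<le> a y" "0 \<le> d"
  shows "(\<Sum>y\<in>UNIV. max 0 (a y - d)) \<le> max 0 ((\<Sum>y\<in>UNIV. a y) - d)"
proof (cases "\<forall>y. a y \<le> d")
  case True
  then have "(\<Sum>y\<in>UNIV. max 0 (a y - d)) = 0" by (intro sum.neutral) auto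
  then show ?thesis by simp
next
  case False
  then obtain y0 where y0: "a y0 > d" by (auto simp: not_le)
  have "(\<Sum>y\<in>UNIV. max 0 (a y - d)) = max 0 (a y0 - d) + (\<Sum>y\<in>UNIV-{y0}. max 0 (a y - d))"
    by (subst sum.remove[of _ y0]) auto
  also have "\<dots> \<le> (a y0 - d) + (\<Sum>y\<in>UNIV-{y0}. a y)"
    using y0 assms by (intro add_mono sum_mono) auto
  also have "\<dots> = (\<Sum>y\<in>UNIV. a y) - d"
    by (subst (2) sum.remove[of _ y0]) auto
  finally show ?thesis by simp
qed


lemma bipr_le: "\<nu> \<in> bip_feasible_real g h \<Longrightarrow> \<nu> x y \<le> g x"
proof -
  assume m: "\<nu> \<in> bip_feasible_real g h"
  have "\<nu> x y \<le> (\<Sum>y\<in>UNIV. \<nu> x y)" using m by (intro member_le_sum) (auto simp: bip_feasible_real_def)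
  also have "\<dots> \<le> g x" using m by (simp add: bip_feasible_real_def)
  finally show ?thesis .
qed

lemma WBr_ne: "(\<forall>x. 0 \<le> g x) \<Longrightarrow> (\<lambda>x y. 0) \<in> bip_feasible_real g g"
  by (simp add: bip_feasible_real_def)

lemma WBr_bdd: "bdd_above ((\<lambda>\<nu>. \<Sum>(x,y)\<in>UNIV. \<nu> x y * \<Psi> x y) ` bip_feasible_real (g::'x::finite \<Rightarrow> real) g)"
proof (rule bdd_aboveI2)
  fix \<nu> assume m: "\<nu> \<in> bip_feasible_real g g"
  show "(\<Sum>(x,y)\<in>UNIV. \<nu> x y * \<Psi> x y) \<le> (\<Sum>(x,y)\<in>UNIV. g x * \<bar>\<Psi> x y\<bar>)"
  proof (rule sum_mono, clarify)
    fix x y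
    have "\<nu> x y * \<Psi> x y \<le> \<nu> x y * \<bar>\<Psi> x y\<bar>" using m
      by (intro mult_left_mono) (auto simp: bip_feasible_real_def)
    also have "\<dots> \<le> g x * \<bar>\<Psi> x y\<bar>" using bipr_le[OF m] by (intro mult_right_mono) auto
    finally show "\<nu> x y * \<Psi> x y \<le> g x * \<bar>\<Psi> x y\<bar>" .
  qed
qed

lemma WBr_upper: "\<nu> \<in> bip_feasible_real g g \<Longrightarrow> (\<Sum>(x,y)\<in>UNIV. \<nu> x y * \<Psi> x y) \<le> W_B_real (g::'x::finite \<Rightarrow> real) g \<Psi>"
  unfolding W_B_real_def by (rule cSup_upper[OF _ WBr_bdd]) auto

lemma WBr_least: "(\<forall>x. 0 \<le> g x) \<Longrightarrow> (\<And>\<nu>. \<nu> \<in> bip_feasible_real g g \<Longrightarrow> (\<Sum>(x,y)\<in>UNIV. \<nu> x y * \<Psi> x y) \<le> c)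
   \<Longrightarrow> W_B_real (g::'x::finite \<Rightarrow> real) g \<Psi> \<le> c"
  unfolding W_B_real_def by (rule cSup_least) (use WBr_ne in auto)

lemma WBr_lip:
  fixes g h :: "'x::finite \<Rightarrow> real"
  assumes g0: "\<forall>x. 0 \<le> g x" and h0: "\<forall>x. 0 \<le> h x" and d: "\<forall>x. \<bar>g x - h x\<bar> \<le> d"
  shows "W_B_real g g \<Psi> \<le> W_B_real h h \<Psi> + d * (\<Sum>(x,y)\<in>UNIV. \<bar>\<Psi> x y\<bar>)"
proof (rule WBr_least[OF g0])
  have d0: "0 \<le> d" using d by (meson abs_ge_zero order_trans)
  fix \<nu> assume m: "\<nu> \<in> bip_feasible_real g g"
  define \<nu>' where "\<nu>' = (\<lambda>x y. max 0 (\<nu> x y - d))"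
  have nn: "\<And>x y. 0 \<le> \<nu> x y" using m by (simp add: bip_feasible_real_def)
  have m': "\<nu>' \<in> bip_feasible_real h h"
    unfolding bip_feasible_real_def
  proof (intro CollectI conjI allI)
    fix x y show "0 \<le> \<nu>' x y" by (simp add: \<nu>'_def)
  next
    fix x
    have "(\<Sum>y\<in>UNIV. \<nu>' x y) \<le> max 0 ((\<Sum>y\<in>UNIV. \<nu> x y) - d)"
      unfolding \<nu>'_def by (rule sum_max_le) (use nn d0 in auto)
    also have "\<dots> \<le> h x"
      using m[unfolded bip_feasible_real_def] h0 d[rule_format, of x]
      by (auto simp: abs_le_iff intro: order_trans[of _ "g x - d"])
    finally show "(\<Sum>y\<in>UNIV. \<nu>' x y) \<le> h x" .
  next
    fix y
    have "(\<Sum>x\<in>UNIV. \<nu>' x y) \<le> max 0 ((\<Sum>x\<in>UNIV. \<nu> x y) - d)"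
      unfolding \<nu>'_def by (rule sum_max_le) (use nn d0 in auto)
    also have "\<dots> \<le> h y"
      using m[unfolded bip_feasible_real_def] h0 d[rule_format, of y]
      by (auto simp: abs_le_iff intro: order_trans[of _ "g y - d"])
    finally show "(\<Sum>x\<in>UNIV. \<nu>' x y) \<le> h y" .
  qed
  have "(\<Sum>(x,y)\<in>UNIV. \<nu> x y * \<Psi> x y) \<le> (\<Sum>(x,y)\<in>UNIV. \<nu>' x y * \<Psi> x y + d * \<bar>\<Psi> x y\<bar>)"
  proof (rule sum_mono, clarify)
    fix x y
    have a: "0 \<le> \<nu> x y - \<nu>' x y" "\<nu> x y - \<nu>' x y \<le> d" using nn[of x y] d0 by (auto simp: \<nu>'_def)
    have "(\<nu> x y - \<nu>' x y) * \<Psi> x y \<le> (\<nu> x y - \<nu>' x y) * \<bar>\<Psi> x y\<bar>"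
      using a by (intro mult_left_mono) auto
    also have "\<dots> \<le> d * \<bar>\<Psi> x y\<bar>" using a by (intro mult_right_mono) auto
    finally show "\<nu> x y * \<Psi> x y \<le> \<nu>' x y * \<Psi> x y + d * \<bar>\<Psi> x y\<bar>" by (simp add: algebra_simps)
  qed
  also have "\<dots> = (\<Sum>(x,y)\<in>UNIV. \<nu>' x y * \<Psi> x y) + d * (\<Sum>(x,y)\<in>UNIV. \<bar>\<Psi> x y\<bar>)"
    by (simp add: sum.distrib sum_distrib_left case_prod_beta)
  also have "\<dots> \<le> W_B_real h h \<Psi> + d * (\<Sum>(x,y)\<in>UNIV. \<bar>\<Psi> x y\<bar>)"
    using WBr_upper[OF m'] by simp
  finally show "(\<Sum>(x,y)\<in>UNIV. \<nu> x y * \<Psi> x y) \<le> W_B_real h h \<Psi> + d * (\<Sum>(x,y)\<in>UNIV. \<bar>\<Psi> x y\<bar>)" .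
qed


lemma fl_bounds: "0 \<le> (t::real) \<Longrightarrow> real (nat \<lfloor>t\<rfloor>) = of_int \<lfloor>t\<rfloor> \<and> of_int \<lfloor>t\<rfloor> \<le> t \<and> t < of_int \<lfloor>t\<rfloor> + 1"
  by (simp add: of_nat_nat)

lemma rounding:
  fixes \<Phi> :: "'x::finite \<Rightarrow> 'x \<Rightarrow> real" and n :: "'x \<Rightarrow> nat"
  assumes sym: "\<And>x y. \<Phi> x y = \<Phi> y x"
    and m: "\<nu> \<in> bip_feasible_real (\<lambda>x. real (n x)) (\<lambda>x. real (n x))"
  shows "\<exists>\<mu>\<in>roommate_feasible n. (\<Sum>(x,y)\<in>UNIV. \<nu> x y * (\<Phi> x y / 2))
            \<le> roommate_surplus \<mu> \<Phi> + (\<Sum>(x,y)\<in>UNIV. \<bar>\<Phi> x y\<bar>)"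
proof -
  define s where "s x y = (\<nu> x y + \<nu> y x) / 2" for x y
  define \<mu> where "\<mu> x y = (if x = y then nat \<lfloor>s x y / 2\<rfloor> else nat \<lfloor>s x y\<rfloor>)" for x y
  have nn: "\<And>x y. 0 \<le> \<nu> x y" using m by (simp add: bip_feasible_real_def)
  have s0: "\<And>x y. 0 \<le> s x y" using nn by (simp add: s_def)
  have ssym: "\<And>x y. s x y = s y x" by (simp add: s_def add.commute)
  have D: "real (Dm \<mu> x y) \<le> s x y \<and> s x y \<le> real (Dm \<mu> x y) + 2" for x y
  proof (cases "x = y")
    case True
    have h0: "0 \<le> s x y / 2" using s0[of x y] by simp
    have e: "real (nat \<lfloor>s x y / 2\<rfloor>) = of_int \<lfloor>s x y / 2\<rfloor>" using fl_bounds[OF h0] by blast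
    have "real (Dm \<mu> x y) = 2 * of_int \<lfloor>s x y / 2\<rfloor>" using True e by (simp add: Dm_def \<mu>_def)
    then show ?thesis using of_int_floor_le[of "s x y / 2"] real_of_int_floor_add_one_gt[of "s x y / 2"] by linarith
  next
    case False
    have e: "real (nat \<lfloor>s x y\<rfloor>) = of_int \<lfloor>s x y\<rfloor>" using fl_bounds[OF s0[of x y]] by blast
    have "real (Dm \<mu> x y) = of_int \<lfloor>s x y\<rfloor>" using False e by (simp add: Dm_def \<mu>_def)
    then show ?thesis using of_int_floor_le[of "s x y"] real_of_int_floor_add_one_gt[of "s x y"] by linarith
  qed
  have feas: "\<mu> \<in> roommate_feasible n"
    unfolding roommate_feasible_def
  proof (intro CollectI conjI allI)
    fix x y show "\<mu> x y = \<mu> y x" by (simp add: \<mu>_def ssym)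
  next
    fix x
    have "real (2 * \<mu> x x + (\<Sum>y\<in>UNIV - {x}. \<mu> x y)) = real (Dm \<mu> x x) + (\<Sum>y\<in>UNIV - {x}. real (Dm \<mu> x y))"
      by (simp add: Dm_def)
    also have "\<dots> \<le> s x x + (\<Sum>y\<in>UNIV - {x}. s x y)"
      using D by (intro add_mono sum_mono) auto
    also have "\<dots> = (\<Sum>y\<in>UNIV. s x y)" by (subst (2) sum.remove[of _ x]) auto
    also have "\<dots> = ((\<Sum>y\<in>UNIV. \<nu> x y) + (\<Sum>y\<in>UNIV. \<nu> y x)) / 2"
      by (simp add: s_def sum.distrib sum_divide_distrib[symmetric])
    also have "\<dots> \<le> real (n x)"
    proof -
      have "(\<Sum>y\<in>UNIV. \<nu> x y) \<le> real (n x)" "(\<Sum>y\<in>UNIV. \<nu> y x) \<le> real (n x)"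
        using m by (auto simp: bip_feasible_real_def)
      then show ?thesis by simp
    qed
    finally show "2 * \<mu> x x + (\<Sum>y\<in>UNIV - {x}. \<mu> x y) \<le> n x" by linarith
  qed
  have "(\<Sum>(x,y)\<in>UNIV. \<nu> y x * (\<Phi> x y / 2)) = (\<Sum>(x,y)\<in>UNIV. \<nu> y x * (\<Phi> y x / 2))"
    using sym by simp
  also have "\<dots> = (\<Sum>(x,y)\<in>UNIV. \<nu> x y * (\<Phi> x y / 2))"
    by (rule sum_swap_UNIV[of "\<lambda>y x. \<nu> y x * (\<Phi> y x / 2)"])
  finally have sw: "(\<Sum>(x,y)\<in>UNIV. \<nu> y x * (\<Phi> x y / 2)) = (\<Sum>(x,y)\<in>UNIV. \<nu> x y * (\<Phi> x y / 2))" .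
  have "(\<Sum>(x,y)\<in>UNIV. s x y * (\<Phi> x y / 2)) =
      ((\<Sum>(x,y)\<in>UNIV. \<nu> x y * (\<Phi> x y / 2)) + (\<Sum>(x,y)\<in>UNIV. \<nu> y x * (\<Phi> x y / 2))) / 2"
    by (simp add: s_def sum.distrib sum_divide_distrib[symmetric] case_prod_beta algebra_simps)
  also have "\<dots> = (\<Sum>(x,y)\<in>UNIV. \<nu> x y * (\<Phi> x y / 2))" using sw by simp
  finally have vs: "(\<Sum>(x,y)\<in>UNIV. \<nu> x y * (\<Phi> x y / 2)) = (\<Sum>(x,y)\<in>UNIV. s x y * (\<Phi> x y / 2))" by simp
  have "(\<Sum>(x,y)\<in>UNIV. s x y * (\<Phi> x y / 2)) \<le> (\<Sum>(x,y)\<in>UNIV. real (Dm \<mu> x y) * (\<Phi> x y / 2) + \<bar>\<Phi> x y\<bar>)"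
  proof (rule sum_mono, clarify)
    fix x y
    have a: "0 \<le> s x y - real (Dm \<mu> x y)" "s x y - real (Dm \<mu> x y) \<le> 2" using D[of x y] by auto
    have "(s x y - real (Dm \<mu> x y)) * (\<Phi> x y / 2) \<le> (s x y - real (Dm \<mu> x y)) * (\<bar>\<Phi> x y\<bar> / 2)"
      using a by (intro mult_left_mono) auto
    also have "\<dots> \<le> 2 * (\<bar>\<Phi> x y\<bar> / 2)" using a by (intro mult_right_mono) auto
    finally show "s x y * (\<Phi> x y / 2) \<le> real (Dm \<mu> x y) * (\<Phi> x y / 2) + \<bar>\<Phi> x y\<bar>"
      by (simp add: algebra_simps)
  qed
  also have "\<dots> = roommate_surplus \<mu> \<Phi> + (\<Sum>(x,y)\<in>UNIV. \<bar>\<Phi> x y\<bar>)"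
    by (simp add: surplus_Dm sum.distrib case_prod_beta)
  finally show ?thesis using feas vs by auto
qed


lemma zero_roommate: "(\<lambda>x y. 0) \<in> roommate_feasible n"
  by (simp add: roommate_feasible_def)

lemma zero_bip: "(\<lambda>x y. 0) \<in> bip_feasible n m"
  by (simp add: bip_feasible_def)

lemma WP_ge_surplus: "\<mu> \<in> roommate_feasible (n::'x::finite \<Rightarrow> nat) \<Longrightarrow> roommate_surplus \<mu> \<Phi> \<le> W_P n \<Phi>"
  unfolding W_P_def by (rule Max_ge) (auto intro: finite_roommate)

lemma WB_ge: "\<nu> \<in> bip_feasible (n::'x::finite \<Rightarrow> nat) m \<Longrightarrow> (\<Sum>(x,y)\<in>UNIV. real (\<nu> x y) * \<Psi> x y) \<le> W_B n m \<Psi>"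
  unfolding W_B_def by (rule Max_ge) (auto intro: finite_bip)

lemma WP_le_WB: "W_P (n::'x::finite \<Rightarrow> nat) \<Phi> \<le> W_B n n (\<lambda>x y. \<Phi> x y / 2)"
proof -
  have "W_P n \<Phi> \<in> (\<lambda>\<mu>. roommate_surplus \<mu> \<Phi>) ` roommate_feasible n"
    unfolding W_P_def by (rule Max_in) (use finite_roommate zero_roommate in auto)
  then obtain \<mu> where m: "\<mu> \<in> roommate_feasible n" and e: "W_P n \<Phi> = roommate_surplus \<mu> \<Phi>" by auto
  have sy: "\<And>x y. \<mu> x y = \<mu> y x" using m by (simp add: roommate_feasible_def)
  have c: "\<And>x. 2 * \<mu> x x + (\<Sum>y\<in>UNIV - {x}. \<mu> x y) \<le> n x" using m unfolding roommate_feasible_def by blast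
  have row: "(\<Sum>y\<in>UNIV. Dm \<mu> x y) \<le> n x" for x
  proof -
    have "(\<Sum>y\<in>UNIV. Dm \<mu> x y) = Dm \<mu> x x + (\<Sum>y\<in>UNIV - {x}. Dm \<mu> x y)"
      by (subst sum.remove[of _ x]) auto
    also have "\<dots> = 2 * \<mu> x x + (\<Sum>y\<in>UNIV - {x}. \<mu> x y)"
      by (simp add: Dm_def)
    finally show ?thesis using c[of x] by simp
  qed
  have "Dm \<mu> \<in> bip_feasible n n"
    unfolding bip_feasible_def
  proof (intro CollectI conjI allI)
    fix x show "(\<Sum>y\<in>UNIV. Dm \<mu> x y) \<le> n x" by (rule row)
  next
    fix y have "(\<Sum>x\<in>UNIV. Dm \<mu> x y) = (\<Sum>x\<in>UNIV. Dm \<mu> y x)"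
      by (intro sum.cong) (auto simp: Dm_def sy)
    then show "(\<Sum>x\<in>UNIV. Dm \<mu> x y) \<le> n y" using row[of y] by simp
  qed
  from WB_ge[OF this, of "\<lambda>x y. \<Phi> x y / 2"] show ?thesis
    using e surplus_Dm[of \<mu> \<Phi>] by simp
qed

lemma WB_le_WBr:
  fixes n :: "'x::finite \<Rightarrow> nat"
  assumes N: "0 < real (\<Sum>z\<in>UNIV. n z)"
  shows "W_B n n \<Psi> \<le> real (\<Sum>z\<in>UNIV. n z) *
     W_B_real (\<lambda>x. real (n x) / real (\<Sum>z\<in>UNIV. n z)) (\<lambda>x. real (n x) / real (\<Sum>z\<in>UNIV. n z)) \<Psi>"
proof -
  define N where "N = real (\<Sum>z\<in>UNIV. n z)"
  have N0: "0 < N" using N by (simp add: N_def)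
  have "W_B n n \<Psi> \<in> (\<lambda>\<nu>. \<Sum>(x,y)\<in>UNIV. real (\<nu> x y) * \<Psi> x y) ` bip_feasible n n"
    unfolding W_B_def by (rule Max_in) (use finite_bip[of n n] zero_bip[of n n] in auto)
  then obtain \<nu> where m: "\<nu> \<in> bip_feasible n n" and e: "W_B n n \<Psi> = (\<Sum>(x,y)\<in>UNIV. real (\<nu> x y) * \<Psi> x y)" by auto
  define \<nu>' where "\<nu>' x y = real (\<nu> x y) / N" for x y
  have m': "\<nu>' \<in> bip_feasible_real (\<lambda>x. real (n x) / N) (\<lambda>x. real (n x) / N)"
    unfolding bip_feasible_real_def
  proof (intro CollectI conjI allI)
    fix x y show "0 \<le> \<nu>' x y" using N0 by (simp add: \<nu>'_def)
  next
    fix x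
    have "(\<Sum>y\<in>UNIV. \<nu> x y) \<le> n x" using m by (simp add: bip_feasible_def)
    then have "real (\<Sum>y\<in>UNIV. \<nu> x y) / N \<le> real (n x) / N" using N0
      by (intro divide_right_mono of_nat_mono) auto
    then show "(\<Sum>y\<in>UNIV. \<nu>' x y) \<le> real (n x) / N"
      by (simp add: \<nu>'_def sum_divide_distrib[symmetric])
  next
    fix y
    have "(\<Sum>x\<in>UNIV. \<nu> x y) \<le> n y" using m by (simp add: bip_feasible_def)
    then have "real (\<Sum>x\<in>UNIV. \<nu> x y) / N \<le> real (n y) / N" using N0
      by (intro divide_right_mono of_nat_mono) auto
    then show "(\<Sum>x\<in>UNIV. \<nu>' x y) \<le> real (n y) / N"
      by (simp add: \<nu>'_def sum_divide_distrib[symmetric])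
  qed
  have "W_B n n \<Psi> = N * (\<Sum>(x,y)\<in>UNIV. \<nu>' x y * \<Psi> x y)"
    unfolding e sum_distrib_left by (rule sum.cong) (use N0 in \<open>auto simp: \<nu>'_def\<close>)
  also have "\<dots> \<le> N * W_B_real (\<lambda>x. real (n x) / N) (\<lambda>x. real (n x) / N) \<Psi>"
    using N0 WBr_upper[OF m'] by (intro mult_left_mono) auto
  finally show ?thesis by (simp add: N_def)
qed

lemma WP_ge_WBr:
  fixes n :: "'x::finite \<Rightarrow> nat" and \<Phi> :: "'x \<Rightarrow> 'x \<Rightarrow> real"
  assumes sym: "\<And>x y. \<Phi> x y = \<Phi> y x"
    and N: "0 < real (\<Sum>z\<in>UNIV. n z)"
  shows "real (\<Sum>z\<in>UNIV. n z) *
     W_B_real (\<lambda>x. real (n x) / real (\<Sum>z\<in>UNIV. n z)) (\<lambda>x. real (n x) / real (\<Sum>z\<in>UNIV. n z)) (\<lambda>x y. \<Phi> x y / 2)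
     - (\<Sum>(x,y)\<in>UNIV. \<bar>\<Phi> x y\<bar>) \<le> W_P n \<Phi>"
proof -
  define N where "N = real (\<Sum>z\<in>UNIV. n z)"
  define C where "C = (\<Sum>(x,y)\<in>UNIV. \<bar>\<Phi> x y\<bar>)"
  have N0: "0 < N" using N by (simp add: N_def)
  have "W_B_real (\<lambda>x. real (n x) / N) (\<lambda>x. real (n x) / N) (\<lambda>x y. \<Phi> x y / 2) \<le> (W_P n \<Phi> + C) / N"
  proof (rule WBr_least)
    show "\<forall>x. 0 \<le> real (n x) / N" using N0 by simp
  next
    fix \<nu> assume m: "\<nu> \<in> bip_feasible_real (\<lambda>x. real (n x) / N) (\<lambda>x. real (n x) / N)"
    define \<nu>1 where "\<nu>1 x y = N * \<nu> x y" for x y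
    have m1: "\<nu>1 \<in> bip_feasible_real (\<lambda>x. real (n x)) (\<lambda>x. real (n x))"
      unfolding bip_feasible_real_def
    proof (intro CollectI conjI allI)
      fix x y show "0 \<le> \<nu>1 x y" using N0 m by (simp add: \<nu>1_def bip_feasible_real_def)
    next
      fix x
      have "(\<Sum>y\<in>UNIV. \<nu> x y) \<le> real (n x) / N" using m by (simp add: bip_feasible_real_def)
      then have "N * (\<Sum>y\<in>UNIV. \<nu> x y) \<le> real (n x)" using N0 by (simp add: pos_le_divide_eq mult.commute)
      then show "(\<Sum>y\<in>UNIV. \<nu>1 x y) \<le> real (n x)" by (simp add: \<nu>1_def sum_distrib_left)
    next
      fix y
      have "(\<Sum>x\<in>UNIV. \<nu> x y) \<le> real (n y) / N" using m by (simp add: bip_feasible_real_def)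
      then have "N * (\<Sum>x\<in>UNIV. \<nu> x y) \<le> real (n y)" using N0 by (simp add: pos_le_divide_eq mult.commute)
      then show "(\<Sum>x\<in>UNIV. \<nu>1 x y) \<le> real (n y)" by (simp add: \<nu>1_def sum_distrib_left)
    qed
    obtain \<mu> where mu: "\<mu> \<in> roommate_feasible n"
      and le: "(\<Sum>(x,y)\<in>UNIV. \<nu>1 x y * (\<Phi> x y / 2)) \<le> roommate_surplus \<mu> \<Phi> + C"
      using rounding[where \<Phi>=\<Phi>, OF sym m1, folded C_def] by (elim bexE)
    have "N * (\<Sum>(x,y)\<in>UNIV. \<nu> x y * (\<Phi> x y / 2)) = (\<Sum>(x,y)\<in>UNIV. \<nu>1 x y * (\<Phi> x y / 2))"
      by (simp add: \<nu>1_def sum_distrib_left case_prod_beta mult.assoc)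
    also have "\<dots> \<le> W_P n \<Phi> + C" using le WP_ge_surplus[OF mu, of \<Phi>] by simp
    finally show "(\<Sum>(x,y)\<in>UNIV. \<nu> x y * (\<Phi> x y / 2)) \<le> (W_P n \<Phi> + C) / N"
      using N0 by (simp add: pos_le_divide_eq mult.commute)
  qed
  then have "W_B_real (\<lambda>x. real (n x) / N) (\<lambda>x. real (n x) / N) (\<lambda>x y. \<Phi> x y / 2) * N \<le> W_P n \<Phi> + C"
    using N0 by (simp add: pos_le_divide_eq)
  then show ?thesis unfolding N_def[symmetric] C_def[symmetric] by (simp add: mult.commute)
qed


theorem proposition2:
  fixes \<Phi> :: "'x::finite \<Rightarrow> 'x \<Rightarrow> real"
    and n :: "nat \<Rightarrow> 'x \<Rightarrow> nat"
    and f :: "'x \<Rightarrow> real"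
  assumes sym: "\<And>x y. \<Phi> x y = \<Phi> y x"
    and N_inf: "filterlim (\<lambda>k. (\<Sum>x\<in>UNIV. n k x)) at_top sequentially"
    and freq: "\<And>x. (\<lambda>k. real (n k x) / real (\<Sum>z\<in>UNIV. n k z)) \<longlonglongrightarrow> f x"
  shows "((\<lambda>k. W_P (n k) \<Phi> / real (\<Sum>z\<in>UNIV. n k z))
           \<longlonglongrightarrow> W_B_real f f (\<lambda>x y. \<Phi> x y / 2))
       \<and> ((\<lambda>k. W_B (n k) (n k) (\<lambda>x y. \<Phi> x y / 2) / real (\<Sum>z\<in>UNIV. n k z))
           \<longlonglongrightarrow> W_B_real f f (\<lambda>x y. \<Phi> x y / 2))"
proof -
  define \<Psi> where "\<Psi> = (\<lambda>x y. \<Phi> x y / 2)"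
  define N where "N k = real (\<Sum>z\<in>UNIV. n k z)" for k
  define g where "g k x = real (n k x) / N k" for k x
  define V where "V k = W_B_real (g k) (g k) \<Psi>" for k
  define Vf where "Vf = W_B_real f f \<Psi>"
  define C where "C = (\<Sum>(x,y)\<in>UNIV. \<bar>\<Phi> x y\<bar>)"
  define S where "S = (\<Sum>(x,y)\<in>UNIV. \<bar>\<Psi> x y\<bar>)"
  define d where "d k = (\<Sum>x\<in>UNIV. \<bar>g k x - f x\<bar>)" for k
  have gf: "\<And>x. (\<lambda>k. g k x) \<longlonglongrightarrow> f x" using freq by (simp add: g_def N_def)
  have g0: "\<forall>x. 0 \<le> g k x" for k unfolding g_def N_def by (intro allI divide_nonneg_nonneg) (auto intro: sum_nonneg)
  have f0: "\<forall>x. 0 \<le> f x"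
  proof
    fix x show "0 \<le> f x"
      by (rule LIMSEQ_le_const[OF gf[of x]]) (use g0 in auto)
  qed
  have d0: "d \<longlonglongrightarrow> 0"
  proof -
    have "(\<lambda>k. \<Sum>x\<in>UNIV. \<bar>g k x - f x\<bar>) \<longlonglongrightarrow> (\<Sum>x\<in>UNIV. \<bar>f x - f x\<bar>)"
      by (intro tendsto_intros gf)
    then show ?thesis by (simp add: d_def[abs_def])
  qed
  have dle: "\<forall>x. \<bar>g k x - f x\<bar> \<le> d k" for k
    unfolding d_def by (auto intro: member_le_sum)
  have Vlo: "Vf - d k * S \<le> V k" for k
    using WBr_lip[OF f0 g0, of k "d k" \<Psi>] dle[of k]
    unfolding V_def Vf_def S_def by (auto simp: abs_minus_commute)
  have Vhi: "V k \<le> Vf + d k * S" for k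
    using WBr_lip[OF g0 f0, of k "d k" \<Psi>] dle[of k]
    unfolding V_def Vf_def S_def by auto
  have VV: "V \<longlonglongrightarrow> Vf"
  proof (rule tendsto_sandwich[of "\<lambda>k. Vf - d k * S" _ _ "\<lambda>k. Vf + d k * S"])
    show "\<forall>\<^sub>F k in sequentially. Vf - d k * S \<le> V k" using Vlo by simp
    show "\<forall>\<^sub>F k in sequentially. V k \<le> Vf + d k * S" using Vhi by simp
    show "(\<lambda>k. Vf - d k * S) \<longlonglongrightarrow> Vf" using tendsto_diff[OF tendsto_const tendsto_mult[OF d0 tendsto_const], of Vf S] by simp
    show "(\<lambda>k. Vf + d k * S) \<longlonglongrightarrow> Vf" using tendsto_add[OF tendsto_const tendsto_mult[OF d0 tendsto_const], of Vf S] by simp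
  qed
  have Ninf: "filterlim N at_top sequentially"
    unfolding N_def by (rule filterlim_compose[OF filterlim_real_sequentially N_inf])
  have Npos: "\<forall>\<^sub>F k in sequentially. 0 < N k"
    using Ninf by (simp add: filterlim_at_top_dense)
  have CN: "(\<lambda>k. C / N k) \<longlonglongrightarrow> 0"
    by (rule tendsto_divide_0[OF tendsto_const filterlim_at_top_imp_at_infinity[OF Ninf]])
  have lowlim: "(\<lambda>k. V k - C / N k) \<longlonglongrightarrow> Vf"
    using tendsto_diff[OF VV CN] by simp
  have bounds: "\<forall>\<^sub>F k in sequentially.
      V k - C / N k \<le> W_P (n k) \<Phi> / N k \<and> W_P (n k) \<Phi> / N k \<le> W_B (n k) (n k) \<Psi> / N k
      \<and> W_B (n k) (n k) \<Psi> / N k \<le> V k"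
    using Npos
  proof eventually_elim
    case (elim k)
    have a: "N k * V k - C \<le> W_P (n k) \<Phi>"
      using WP_ge_WBr[where \<Phi>=\<Phi>, OF sym, of "n k"] elim
      unfolding V_def g_def N_def C_def \<Psi>_def by simp
    have b: "W_P (n k) \<Phi> \<le> W_B (n k) (n k) \<Psi>"
      unfolding \<Psi>_def by (rule WP_le_WB)
    have c: "W_B (n k) (n k) \<Psi> \<le> N k * V k"
      using WB_le_WBr[of "n k" \<Psi>] elim unfolding V_def g_def N_def by simp
    have "V k - C / N k = (N k * V k - C) / N k" using elim by (simp add: diff_divide_distrib)
    then show ?case using a b c elim
      by (auto simp: divide_right_mono pos_divide_le_eq mult.commute)
  qed
  have P1: "(\<lambda>k. W_P (n k) \<Phi> / N k) \<longlonglongrightarrow> Vf"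
    by (rule tendsto_sandwich[OF _ _ lowlim VV]) (use bounds in \<open>auto elim: eventually_mono\<close>)
  have P2: "(\<lambda>k. W_B (n k) (n k) \<Psi> / N k) \<longlonglongrightarrow> Vf"
    by (rule tendsto_sandwich[OF _ _ lowlim VV]) (use bounds in \<open>auto elim: eventually_mono\<close>)
  show ?thesis using P1 P2 unfolding Vf_def \<Psi>_def N_def by simp
qed

end
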